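(* Let $k,r\geq 0$ be integers. Every $r$-shallow minor of a $k$-gap-cover-planar graph is $(2r+1)k$-gap-cover-planar.
   Context: All graphs are simple, finite and undirected. A drawing of a graph $G$ in the plane represents each vertex by a distinct point and each edge $vw$ by a non-self-intersecting curve between the points of $v$ and $w$, such that no three edges cross at a single point. Two distinct edges are independent if they share no endpoint. For a drawing $D$ of $G$, let $D^\times$ be the set of unordered pairs $\{e,f\}$ of independent edges that cross in $D$. A bearing of $D$ is a set $B$ of ordered pairs $(e,f)$ with $\{e,f\}\in D^\times$ such that for each $\{e,f\}\in D^\times$ at least one of $(e,f),(f,e)$ lies in $B$. For a bearing $B$, a $B$-cover of an edge $e$ is a set $C\subseteq V(G)$ such that every edge $f$ with $(e,f)\in B$ has an endpoint in $C$. A drawing $D$ is $k$-gap-cover-planar if there is a bearing $B$ of $D$ such that each edge $vw\in E(G)$ has a $B$-cover contained in $V(G)\setminus\{v,w\}$ of size at most $k$. A graph is $k$-gap-cover-planar if it has a $k$-gap-cover-planar drawing in the plane. A model of $H$ in $G$ assigns disjoint non-empty connected subgraphs $\mu(v)$ of $G$ to the vertices $v\in V(H)$ with an edge of $G$ between $\mu(v)$ and $\mu(w)$ for every $vw\in E(H)$; it is $r$-shallow if each $\mu(v)$ has radius at most $r$, and then $H$ is an $r$-shallow minor of $G$. *)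

theory Defs
  imports "HOL-Analysis.Analysis"
begin

definition simple_graph :: "'a set \<Rightarrow> 'a set set \<Rightarrow> bool" where
  "simple_graph V E \<longleftrightarrow> finite V \<and>
     (\<forall>e\<in>E. \<exists>v w. e = {v, w} \<and> v \<noteq> w \<and> v \<in> V \<and> w \<in> V)"

definition edge_interior :: "('a \<Rightarrow> complex) \<Rightarrow> ('a set \<Rightarrow> real \<Rightarrow> complex) \<Rightarrow> 'a set \<Rightarrow> complex set" where
  "edge_interior pos cv e = path_image (cv e) - pos ` e"

definition drawing ::
  "'a set \<Rightarrow> 'a set set \<Rightarrow> ('a \<Rightarrow> complex) \<Rightarrow> ('a set \<Rightarrow> real \<Rightarrow> complex) \<Rightarrow> bool" where
  "drawing V E pos cv \<longleftrightarrow>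
     inj_on pos V \<and>
     (\<forall>e\<in>E. arc (cv e) \<and>
        (\<exists>v w. e = {v, w} \<and> pathstart (cv e) = pos v \<and> pathfinish (cv e) = pos w) \<and>
        (\<forall>u\<in>V. pos u \<in> path_image (cv e) \<longrightarrow> u \<in> e)) \<and>
     (\<forall>e\<in>E. \<forall>f\<in>E. \<forall>g\<in>E. e \<noteq> f \<and> e \<noteq> g \<and> f \<noteq> g \<longrightarrow>
        edge_interior pos cv e \<inter> edge_interior pos cv f \<inter> edge_interior pos cv g = {})"

definition crossing_pairs ::
  "'a set set \<Rightarrow> ('a \<Rightarrow> complex) \<Rightarrow> ('a set \<Rightarrow> real \<Rightarrow> complex) \<Rightarrow> 'a set set set" where
  "crossing_pairs E pos cv =
     {{e, f} | e f. e \<in> E \<and> f \<in> E \<and> e \<inter> f = {} \<and>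
        path_image (cv e) \<inter> path_image (cv f) \<noteq> {}}"

definition bearing ::
  "'a set set \<Rightarrow> ('a \<Rightarrow> complex) \<Rightarrow> ('a set \<Rightarrow> real \<Rightarrow> complex) \<Rightarrow> ('a set \<times> 'a set) set \<Rightarrow> bool" where
  "bearing E pos cv B \<longleftrightarrow>
     (\<forall>(e, f)\<in>B. {e, f} \<in> crossing_pairs E pos cv) \<and>
     (\<forall>e f. {e, f} \<in> crossing_pairs E pos cv \<longrightarrow> (e, f) \<in> B \<or> (f, e) \<in> B)"

definition B_cover :: "('a set \<times> 'a set) set \<Rightarrow> 'a set \<Rightarrow> 'a set \<Rightarrow> bool" where
  "B_cover B e C \<longleftrightarrow> (\<forall>f. (e, f) \<in> B \<longrightarrow> f \<inter> C \<noteq> {})"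

definition gap_cover_planar_drawing ::
  "nat \<Rightarrow> 'a set \<Rightarrow> 'a set set \<Rightarrow> ('a \<Rightarrow> complex) \<Rightarrow> ('a set \<Rightarrow> real \<Rightarrow> complex) \<Rightarrow> bool" where
  "gap_cover_planar_drawing k V E pos cv \<longleftrightarrow>
     drawing V E pos cv \<and>
     (\<exists>B. bearing E pos cv B \<and>
        (\<forall>e\<in>E. \<exists>C. C \<subseteq> V - e \<and> finite C \<and> card C \<le> k \<and> B_cover B e C))"

definition gap_cover_planar :: "nat \<Rightarrow> 'a set \<Rightarrow> 'a set set \<Rightarrow> bool" where
  "gap_cover_planar k V E \<longleftrightarrow> (\<exists>pos cv. gap_cover_planar_drawing k V E pos cv)"

text \<open>Walks in a graph (Vs, Es) given as vertex lists; a list of length l+1 is a walk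
  of length l.\<close>

definition walk :: "'a set \<Rightarrow> 'a set set \<Rightarrow> 'a list \<Rightarrow> bool" where
  "walk Vs Es xs \<longleftrightarrow> xs \<noteq> [] \<and> set xs \<subseteq> Vs \<and>
     (\<forall>i. Suc i < length xs \<longrightarrow> {xs ! i, xs ! Suc i} \<in> Es)"

definition connected_graph :: "'a set \<Rightarrow> 'a set set \<Rightarrow> bool" where
  "connected_graph Vs Es \<longleftrightarrow> Vs \<noteq> {} \<and>
     (\<forall>x\<in>Vs. \<forall>y\<in>Vs. \<exists>xs. walk Vs Es xs \<and> hd xs = x \<and> last xs = y)"

definition radius_le :: "'a set \<Rightarrow> 'a set set \<Rightarrow> nat \<Rightarrow> bool" where
  "radius_le Vs Es r \<longleftrightarrow>
     (\<exists>c\<in>Vs. \<forall>x\<in>Vs. \<exists>xs. walk Vs Es xs \<and> hd xs = c \<and> last xs = x \<and> length xs \<le> r + 1)"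

definition subgraph :: "'a set \<Rightarrow> 'a set set \<Rightarrow> 'a set \<Rightarrow> 'a set set \<Rightarrow> bool" where
  "subgraph Vs Es V E \<longleftrightarrow> Vs \<subseteq> V \<and> Es \<subseteq> E \<and> (\<forall>e\<in>Es. e \<subseteq> Vs)"

definition shallow_model ::
  "nat \<Rightarrow> 'b set \<Rightarrow> 'b set set \<Rightarrow> 'a set \<Rightarrow> 'a set set \<Rightarrow> ('b \<Rightarrow> 'a set \<times> 'a set set) \<Rightarrow> bool" where
  "shallow_model r VH EH VG EG mu \<longleftrightarrow>
     (\<forall>v\<in>VH. subgraph (fst (mu v)) (snd (mu v)) VG EG \<and>
        fst (mu v) \<noteq> {} \<and> connected_graph (fst (mu v)) (snd (mu v)) \<and>
        radius_le (fst (mu v)) (snd (mu v)) r) \<and>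
     (\<forall>v\<in>VH. \<forall>w\<in>VH. v \<noteq> w \<longrightarrow> fst (mu v) \<inter> fst (mu w) = {}) \<and>
     (\<forall>v w. {v, w} \<in> EH \<longrightarrow> (\<exists>x\<in>fst (mu v). \<exists>y\<in>fst (mu w). {x, y} \<in> EG))"

definition shallow_minor :: "nat \<Rightarrow> 'b set \<Rightarrow> 'b set set \<Rightarrow> 'a set \<Rightarrow> 'a set set \<Rightarrow> bool" where
  "shallow_minor r VH EH VG EG \<longleftrightarrow> (\<exists>mu. shallow_model r VH EH VG EG mu)"

end

theory Submission
  imports Defs
begin

fun img :: "complex list \<Rightarrow> complex set" where
  "img [] = {}"
| "img [x] = {x}"
| "img (x # y # ys) = closed_segment x y \<union> img (y # ys)"

fun ppath :: "complex list \<Rightarrow> real \<Rightarrow> complex" where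
  "ppath [] = linepath 0 0"
| "ppath [x] = linepath x x"
| "ppath (x # y # ys) = linepath x y +++ ppath (y # ys)"

fun prs :: "complex list \<Rightarrow> (complex \<times> complex) set" where
  "prs (x # y # ys) = insert (x, y) (prs (y # ys))"
| "prs _ = {}"

fun chain :: "real \<Rightarrow> complex list \<Rightarrow> bool" where
  "chain d (x # y # ys) = (dist x y < d \<and> chain d (y # ys))"
| "chain d _ = True"

lemma ppath_props:
  "xs \<noteq> [] \<Longrightarrow> path (ppath xs) \<and> pathstart (ppath xs) = hd xs \<and>
     pathfinish (ppath xs) = last xs \<and> path_image (ppath xs) = img xs"
  by (induction xs rule: ppath.induct) (auto simp: path_image_join)

lemma finite_prs: "finite (prs xs)"
  by (induction xs rule: prs.induct) auto

lemma img_sub: "img xs \<subseteq> (\<Union>(c, d)\<in>prs xs. closed_segment c d) \<union> set xs"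
  by (induction xs rule: img.induct) auto

lemma finite_set_img_hd: "x \<in> set xs \<Longrightarrow> x \<in> img xs"
  by (induction xs rule: img.induct) auto

lemma chain_nth: "(\<forall>i. Suc i < length xs \<longrightarrow> dist (xs ! i) (xs ! Suc i) < d) \<Longrightarrow> chain d xs"
  by (induction d xs rule: chain.induct) (auto, (metis Suc_less_eq nth_Cons_Suc length_Cons)+)

lemma seg_line:
  assumes "z \<in> closed_segment a q" "z \<noteq> a"
  shows "q \<in> affine hull {a, z}"
proof -
  obtain u where u: "0 \<le> u" "u \<le> 1" "z = (1 - u) *\<^sub>R a + u *\<^sub>R q"
    using assms(1) unfolding closed_segment_def by auto
  have "u \<noteq> 0" using u assms(2) by auto
  have uq: "u *\<^sub>R q = z - (1 - u) *\<^sub>R a" using u(3) by simp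
  have "q = (1/u) *\<^sub>R (u *\<^sub>R q)" using \<open>u \<noteq> 0\<close> by simp
  also have "\<dots> = (1 - 1/u) *\<^sub>R a + (1/u) *\<^sub>R z"
    unfolding uq using \<open>u \<noteq> 0\<close> by (simp add: algebra_simps diff_divide_distrib)
  finally have "q = (1 - 1/u) *\<^sub>R a + (1/u) *\<^sub>R z" .
  then show ?thesis unfolding affine_hull_2 by force
qed

lemma two_pts:
  assumes "u \<noteq> v" "u \<in> closed_segment x y" "v \<in> closed_segment x y"
  shows "x \<in> affine hull {u, v}"
proof -
  obtain s where s: "u = (1 - s) *\<^sub>R x + s *\<^sub>R y"
    using assms(2) unfolding closed_segment_def by auto
  obtain t where t: "v = (1 - t) *\<^sub>R x + t *\<^sub>R y"
    using assms(3) unfolding closed_segment_def by auto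
  have "s \<noteq> t" using s t assms(1) by auto
  have eq: "(t - s) *\<^sub>R x = t *\<^sub>R u - s *\<^sub>R v"
    unfolding s t by (simp add: algebra_simps)
  have "x = (1/(t-s)) *\<^sub>R ((t - s) *\<^sub>R x)" using \<open>s \<noteq> t\<close> by simp
  also have "\<dots> = (t/(t-s)) *\<^sub>R u + (- s/(t-s)) *\<^sub>R v"
    unfolding eq by (simp add: scaleR_diff_right)
  finally have xe: "x = (t/(t-s)) *\<^sub>R u + (- s/(t-s)) *\<^sub>R v" .
  have ts: "t - s \<noteq> 0" using \<open>s \<noteq> t\<close> by simp
  have "t/(t-s) + (- s/(t-s)) = (t + - s)/(t-s)" by (rule add_divide_distrib[symmetric])
  also have "\<dots> = 1" using ts by simp
  finally have "t/(t-s) + (- s/(t-s)) = 1" .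
  then show ?thesis unfolding affine_hull_2 using xe by blast
qed

lemma two_pts': "u \<noteq> v \<Longrightarrow> u \<in> closed_segment x y \<Longrightarrow> v \<in> closed_segment x y \<Longrightarrow> y \<in> affine hull {u, v}"
  using two_pts[of u v y x] by (simp add: closed_segment_commute)

lemma seg_finite:
  assumes "q \<notin> affine hull {c, d}" "q \<in> {x, y}"
  shows "finite (closed_segment x y \<inter> closed_segment c d)"
proof (rule ccontr)
  assume inf: "infinite (closed_segment x y \<inter> closed_segment c d)"
  then obtain u where u: "u \<in> closed_segment x y \<inter> closed_segment c d"
    by (metis ex_in_conv finite.emptyI)
  from inf have "closed_segment x y \<inter> closed_segment c d \<noteq> {u}" by auto
  then obtain v where v: "v \<in> closed_segment x y \<inter> closed_segment c d" "v \<noteq> u"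
    using u by blast
  have sub: "affine hull {u, v} \<subseteq> affine hull {c, d}"
  proof (rule hull_minimal)
    show "{u, v} \<subseteq> affine hull {c, d}"
      using u v convex_hull_subset_affine_hull segment_convex_hull by blast
    show "affine (affine hull {c, d})" by simp
  qed
  have "x \<in> affine hull {u, v}" "y \<in> affine hull {u, v}"
    using two_pts[of u v x y] two_pts'[of u v x y] u v by auto
  then show False using assms sub by auto
qed

lemma interior_Union_lines:
  fixes Ls :: "(complex \<times> complex) set"
  assumes "finite Ls"
  shows "interior (\<Union>(c, d)\<in>Ls. affine hull {c, d}) = {}"
  using assms
proof (induction Ls rule: finite_induct)
  case empty then show ?case by simp
next
  case (insert p Ls)
  obtain c d where p: "p = (c, d)" by force
  have cl: "closed (\<Union>(c, d)\<in>Ls. affine hull {c, d})"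
    using insert(1) by (intro closed_Union) (auto simp: closed_affine_hull)
  have e: "interior (affine hull {c, d}) = {}"
    by (rule empty_interior_affine_hull) (auto simp: card_insert_if)
  have "(\<Union>(c, d)\<in>insert p Ls. affine hull {c, d}) = (\<Union>(c, d)\<in>Ls. affine hull {c, d}) \<union> affine hull {c, d}"
    using p by auto
  then show ?case using interior_closed_Un_empty_interior[OF cl e] insert(3) by simp
qed

lemma avoid:
  fixes Ls :: "(complex \<times> complex) set"
  assumes "finite Ls" "\<delta> > 0"
  shows "\<exists>q. dist q t < \<delta> \<and> (\<forall>(c, d)\<in>Ls. q \<notin> affine hull {c, d})"
proof (rule ccontr)
  assume "\<not> ?thesis"
  then have "ball t \<delta> \<subseteq> (\<Union>(c, d)\<in>Ls. affine hull {c, d})"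
    by (force simp: dist_commute split: prod.splits)
  then have "ball t \<delta> \<subseteq> interior (\<Union>(c, d)\<in>Ls. affine hull {c, d})"
    by (simp add: interior_maximal)
  then show False using interior_Union_lines[OF assms(1)] assms(2)
    by (metis centre_in_ball empty_iff subsetD)
qed

lemma avoid2:
  fixes Ls :: "(complex \<times> complex) set"
  assumes "finite Ls" "finite A" "\<delta> > 0"
  shows "\<exists>q. dist q t < \<delta> \<and> q \<notin> A \<and> (\<forall>(c, d)\<in>Ls. q \<notin> affine hull {c, d})"
proof -
  obtain q where q: "dist q t < \<delta>" "\<forall>(c, d)\<in>Ls \<union> (\<lambda>z. (z, z)) ` A. q \<notin> affine hull {c, d}"
    using avoid[of "Ls \<union> (\<lambda>z. (z, z)) ` A" \<delta> t] assms by auto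
  have "q \<notin> A"
  proof
    assume "q \<in> A"
    then have "q \<notin> affine hull {q, q}" using q(2) by fastforce
    then show False by (simp add: hull_inc)
  qed
  then show ?thesis using q by auto
qed

lemma perturb:
  fixes A :: "complex set" and OL :: "(complex \<times> complex) set"
  assumes fA: "finite A" and fOL: "finite OL" and d: "\<delta> > 0" and b: "b \<notin> A"
  shows "a \<notin> A \<Longrightarrow> ts \<noteq> [] \<Longrightarrow> \<exists>qs. list_all2 (\<lambda>q t. dist q t < \<delta>) qs ts \<and>
     img (a # qs @ [b]) \<inter> A = {} \<and>
     (\<forall>(c, d)\<in>OL. finite (img (a # qs @ [b]) \<inter> closed_segment c d))"
proof (induction ts arbitrary: a)
  case Nil then show ?case by simp
next
  case (Cons t ts)
  show ?case
  proof (cases "ts = []")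
    case True
    let ?Ls = "OL \<union> (\<lambda>z. (a, z)) ` A \<union> (\<lambda>z. (b, z)) ` A"
    obtain q where q: "dist q t < \<delta>" "q \<notin> A" "\<forall>(c, d)\<in>?Ls. q \<notin> affine hull {c, d}"
      using avoid2[of ?Ls A \<delta> t] fA fOL d by auto
    have qa: "\<forall>z\<in>A. q \<notin> affine hull {a, z}" and qb: "\<forall>z\<in>A. q \<notin> affine hull {b, z}"
      and qo: "\<forall>(c, d)\<in>OL. q \<notin> affine hull {c, d}" using q(3) by auto
    have s1: "closed_segment a q \<inter> A = {}"
    proof (rule ccontr)
      assume "closed_segment a q \<inter> A \<noteq> {}"
      then obtain z where "z \<in> closed_segment a q" "z \<in> A" by auto
      moreover have "z \<noteq> a" using Cons.prems(1) \<open>z \<in> A\<close> by auto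
      ultimately show False using seg_line qa by blast
    qed
    have s2: "closed_segment q b \<inter> A = {}"
    proof (rule ccontr)
      assume "closed_segment q b \<inter> A \<noteq> {}"
      then obtain z where "z \<in> closed_segment b q" "z \<in> A" by (auto simp: closed_segment_commute)
      moreover have "z \<noteq> b" using b \<open>z \<in> A\<close> by auto
      ultimately show False using seg_line qb by blast
    qed
    have "img (a # [q] @ [b]) = closed_segment a q \<union> closed_segment q b \<union> {b}" by auto
    moreover have "\<forall>(c, d)\<in>OL. finite ((closed_segment a q \<union> closed_segment q b \<union> {b}) \<inter> closed_segment c d)"
    proof (clarify)
      fix c d assume "(c, d) \<in> OL"
      then have "q \<notin> affine hull {c, d}" using qo by auto
      then have "finite (closed_segment a q \<inter> closed_segment c d)" "finite (closed_segment q b \<inter> closed_segment c d)"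
        using seg_finite[of q c d a q] seg_finite[of q c d q b] by auto
      then show "finite ((closed_segment a q \<union> closed_segment q b \<union> {b}) \<inter> closed_segment c d)"
        by (metis Int_Un_distrib2 finite_Int finite_UnI finite.emptyI finite_insert)
    qed
    ultimately show ?thesis using True q(1,2) s1 s2 b
      by (intro exI[of _ "[q]"]) auto
  next
    case False
    let ?Ls = "OL \<union> (\<lambda>z. (a, z)) ` A"
    obtain q where q: "dist q t < \<delta>" "q \<notin> A" "\<forall>(c, d)\<in>?Ls. q \<notin> affine hull {c, d}"
      using avoid2[of ?Ls A \<delta> t] fA fOL d by auto
    have qa: "\<forall>z\<in>A. q \<notin> affine hull {a, z}"
      and qo: "\<forall>(c, d)\<in>OL. q \<notin> affine hull {c, d}" using q(3) by auto
    have s1: "closed_segment a q \<inter> A = {}"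
    proof (rule ccontr)
      assume "closed_segment a q \<inter> A \<noteq> {}"
      then obtain z where "z \<in> closed_segment a q" "z \<in> A" by auto
      moreover have "z \<noteq> a" using Cons.prems(1) \<open>z \<in> A\<close> by auto
      ultimately show False using seg_line qa by blast
    qed
    obtain qs where qs: "list_all2 (\<lambda>q t. dist q t < \<delta>) qs ts"
       "img (q # qs @ [b]) \<inter> A = {}"
       "\<forall>(c, d)\<in>OL. finite (img (q # qs @ [b]) \<inter> closed_segment c d)"
      using Cons.IH[OF q(2) False] by blast
    have e: "img (a # (q # qs) @ [b]) = closed_segment a q \<union> img (q # qs @ [b])" by simp
    have "\<forall>(c, d)\<in>OL. finite (img (a # (q # qs) @ [b]) \<inter> closed_segment c d)"
    proof (clarify)
      fix c d assume cd: "(c, d) \<in> OL"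
      then have "q \<notin> affine hull {c, d}" using qo by auto
      then have "finite (closed_segment a q \<inter> closed_segment c d)"
        using seg_finite[of q c d a q] by auto
      then show "finite (img (a # (q # qs) @ [b]) \<inter> closed_segment c d)"
        unfolding e using qs(3) cd by (auto simp: Int_Un_distrib2)
    qed
    then show ?thesis using qs q s1 unfolding e
      by (intro exI[of _ "q # qs"]) auto
  qed
qed

lemma img_close:
  assumes "\<delta>' \<ge> 0"
  shows "list_all2 (\<lambda>q t. dist q t < \<delta>) L T \<Longrightarrow> chain \<delta>' T \<Longrightarrow> x \<in> img L \<Longrightarrow>
    \<exists>t\<in>set T. dist x t < \<delta> + \<delta>'"
proof (induction L arbitrary: T rule: img.induct)
  case 1 then show ?case by simp
next
  case (2 y)
  then show ?case using assms by (cases T) auto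
next
  case (3 y z ys)
  from "3.prems"(1) obtain t t' ts where T: "T = t # t' # ts"
    by (auto simp: list_all2_Cons1)
  show ?case
  proof (cases "x \<in> closed_segment y z")
    case True
    have "dist t y < \<delta>" "dist t' z < \<delta>" "dist t t' < \<delta>'"
      using "3.prems" T by (auto simp: dist_commute)
    then have "y \<in> ball t (\<delta> + \<delta>')" "z \<in> ball t (\<delta> + \<delta>')"
      using assms dist_triangle[of t z t'] by auto
    then have "closed_segment y z \<subseteq> ball t (\<delta> + \<delta>')"
      by (simp add: closed_segment_subset)
    then show ?thesis using True T by (auto simp: dist_commute)
  next
    case False
    then have "x \<in> img (z # ys)" using "3.prems" by simp
    then show ?thesis using "3.IH"[of "t' # ts"] "3.prems" T by auto
  qed
qed

lemma approx_poly:
  assumes pg: "path g" and e: "\<epsilon> > 0" and fA: "finite A" and fOL: "finite OL"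
    and sA: "pathstart g \<notin> A" and fA2: "pathfinish g \<notin> A"
  shows "\<exists>L. L \<noteq> [] \<and> hd L = pathstart g \<and> last L = pathfinish g \<and> img L \<inter> A = {} \<and>
     (\<forall>(c, d)\<in>OL. finite (img L \<inter> closed_segment c d)) \<and>
     (\<forall>x\<in>img L. \<exists>y\<in>path_image g. dist x y < \<epsilon>)"
proof -
  have "uniformly_continuous_on {0..1} g"
    using pg unfolding path_def by (metis compact_Icc compact_uniformly_continuous)
  then obtain d where d: "d > 0" "\<forall>x\<in>{0..1}. \<forall>x'\<in>{0..1}. dist x' x < d \<longrightarrow> dist (g x') (g x) < \<epsilon>/2"
    unfolding uniformly_continuous_on_def using e by (meson half_gt_zero)
  define n :: nat where "n = nat \<lceil>1/d\<rceil> + 2"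
  have n2: "n \<ge> 2" unfolding n_def by simp
  have "real n > 1/d" unfolding n_def by linarith
  then have nd: "1 / real n < d" using d(1) n2
    by (metis divide_less_eq mult.commute of_nat_0_less_iff order_less_le_trans pos2 zero_less_divide_1_iff)
  define f where "f i = g (real i / real n)" for i
  define T where "T = map f [0..<Suc n]"
  define ts where "ts = map f [1..<n]"
  have "[0..<Suc n] = 0 # [1..<n] @ [n]" using n2
    by (metis One_nat_def Suc_1 le_trans one_le_numeral upt_conv_Cons upt_Suc_append zero_less_Suc le_add1 Suc_le_lessD)
  then have T: "T = f 0 # ts @ [f n]" unfolding T_def ts_def by simp
  have f0: "f 0 = pathstart g" and fn: "f n = pathfinish g"
    using n2 by (auto simp: f_def pathstart_def pathfinish_def)
  have tsne: "ts \<noteq> []" unfolding ts_def using n2 by simp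
  obtain qs where qs: "list_all2 (\<lambda>q t. dist q t < \<epsilon>/2) qs ts"
     "img (f 0 # qs @ [f n]) \<inter> A = {}"
     "\<forall>(c, d)\<in>OL. finite (img (f 0 # qs @ [f n]) \<inter> closed_segment c d)"
    using perturb[OF fA fOL half_gt_zero[OF e], of "f n" "f 0" ts] sA fA2 f0 fn tsne by auto
  define L where "L = f 0 # qs @ [f n]"
  have la: "list_all2 (\<lambda>q t. dist q t < \<epsilon>/2) L T"
    unfolding L_def T using qs(1) e by (simp add: list_all2_appendI)
  have ch: "chain (\<epsilon>/2) T"
  proof (rule chain_nth, intro allI impI)
    fix i assume i: "Suc i < length T"
    then have i': "Suc i \<le> n" unfolding T_def by simp
    have "T ! i = f i" "T ! Suc i = f (Suc i)" unfolding T_def using i' by (auto simp: nth_append)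
    moreover have "dist (real (Suc i) / real n) (real i / real n) < d"
      using nd n2 by (simp add: dist_real_def diff_divide_distrib[symmetric])
    moreover have "real i / real n \<in> {0..1}" "real (Suc i) / real n \<in> {0..1}"
      using i' n2 by auto
    ultimately show "dist (T ! i) (T ! Suc i) < \<epsilon>/2"
      unfolding f_def using d(2) by (metis dist_commute)
  qed
  have setT: "set T \<subseteq> path_image g"
    unfolding T_def f_def path_image_def by auto
  have close: "\<forall>x\<in>img L. \<exists>y\<in>path_image g. dist x y < \<epsilon>"
  proof
    fix x assume "x \<in> img L"
    then obtain t where "t \<in> set T" "dist x t < \<epsilon>/2 + \<epsilon>/2"
      using img_close[of "\<epsilon>/2" "\<epsilon>/2" L T x] la ch e by auto
    then show "\<exists>y\<in>path_image g. dist x y < \<epsilon>" using setT by auto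
  qed
  show ?thesis
    using qs(2,3) close f0 fn unfolding L_def[symmetric]
    by (intro exI[of _ L]) (auto simp: L_def)
qed

definition good_polys where
  "good_polys (P :: 'b \<Rightarrow> complex) VH g \<epsilon> S pl \<longleftrightarrow>
    (\<forall>e\<in>S. pl e \<noteq> [] \<and> hd (pl e) = pathstart (g e) \<and> last (pl e) = pathfinish (g e) \<and>
       img (pl e) \<inter> P ` VH \<subseteq> {pathstart (g e), pathfinish (g e)} \<and>
       (\<forall>x\<in>img (pl e). \<exists>y\<in>path_image (g e). dist x y < \<epsilon>)) \<and>
    (\<forall>e\<in>S. \<forall>f\<in>S. e \<noteq> f \<longrightarrow> finite (img (pl e) \<inter> img (pl f))) \<and>
    (\<forall>e\<in>S. \<forall>f\<in>S. \<forall>h\<in>S. e \<noteq> f \<and> e \<noteq> h \<and> f \<noteq> h \<longrightarrow>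
        img (pl e) \<inter> img (pl f) \<inter> img (pl h) \<subseteq> P ` VH)"

lemma core_ind:
  fixes P :: "'b \<Rightarrow> complex" and g :: "'b set \<Rightarrow> real \<Rightarrow> complex"
  assumes fV: "finite VH" and e: "\<epsilon> > 0"
    and gE: "\<forall>e\<in>EH. path (g e) \<and> pathstart (g e) \<in> P ` VH \<and> pathfinish (g e) \<in> P ` VH"
  shows "finite S \<Longrightarrow> S \<subseteq> EH \<Longrightarrow> \<exists>pl. good_polys P VH g \<epsilon> S pl"
proof (induction S rule: finite_induct)
  case empty then show ?case by (auto simp: good_polys_def)
next
  case (insert e S)
  then obtain pl where gp: "good_polys P VH g \<epsilon> S pl" by auto
  note gp1 = gp[unfolded good_polys_def, THEN conjunct1]
  note gp2 = gp[unfolded good_polys_def, THEN conjunct2, THEN conjunct1]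
  note gp3 = gp[unfolded good_polys_def, THEN conjunct2, THEN conjunct2]
  define F where "F = (\<Union>f\<in>S. \<Union>h\<in>S - {f}. img (pl f) \<inter> img (pl h))"
  have fF: "finite F" unfolding F_def using insert(1) gp2
    by (intro finite_UN_I) auto
  define A where "A = (F \<union> P ` VH) - {pathstart (g e), pathfinish (g e)}"
  have fA: "finite A" unfolding A_def using fF fV by auto
  define OL where "OL = (\<Union>f\<in>S. prs (pl f))"
  have fOL: "finite OL" unfolding OL_def using insert(1) finite_prs by auto
  have pe: "path (g e)" using gE insert(4) by auto
  obtain L where L: "L \<noteq> []" "hd L = pathstart (g e)" "last L = pathfinish (g e)" "img L \<inter> A = {}"
     "\<forall>(c, d)\<in>OL. finite (img L \<inter> closed_segment c d)"
     "\<forall>x\<in>img L. \<exists>y\<in>path_image (g e). dist x y < \<epsilon>"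
    using approx_poly[OF pe e fA fOL] unfolding A_def by auto
  have Lfin: "finite (img L \<inter> img (pl f))" if "f \<in> S" for f
  proof -
    have "img L \<inter> img (pl f) \<subseteq> (\<Union>(c, d)\<in>prs (pl f). img L \<inter> closed_segment c d) \<union> set (pl f)"
      using img_sub[of "pl f"] by blast
    moreover have "finite ((\<Union>(c, d)\<in>prs (pl f). img L \<inter> closed_segment c d) \<union> set (pl f))"
      using L(5) that finite_prs[of "pl f"] unfolding OL_def by auto
    ultimately show ?thesis by (rule finite_subset)
  qed
  have Ltr: "img L \<inter> img (pl f) \<inter> img (pl h) \<subseteq> P ` VH" if "f \<in> S" "h \<in> S" "f \<noteq> h" for f h
  proof
    fix x assume x: "x \<in> img L \<inter> img (pl f) \<inter> img (pl h)"
    show "x \<in> P ` VH"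
    proof (rule ccontr)
      assume "x \<notin> P ` VH"
      moreover have "x \<in> F" unfolding F_def using x that by blast
      moreover have "pathstart (g e) \<in> P ` VH" "pathfinish (g e) \<in> P ` VH" using gE insert(4) by auto
      ultimately have "x \<in> A" unfolding A_def by auto
      then show False using L(4) x by auto
    qed
  qed
  have LV: "img L \<inter> P ` VH \<subseteq> {pathstart (g e), pathfinish (g e)}"
    using L(4) unfolding A_def by auto
  define pl' where "pl' = pl(e := L)"
  have p'S: "pl' f = pl f" if "f \<in> S" for f using that insert(2) unfolding pl'_def by auto
  have p'e: "pl' e = L" unfolding pl'_def by simp
  have c1: "\<forall>f\<in>insert e S. pl' f \<noteq> [] \<and> hd (pl' f) = pathstart (g f) \<and> last (pl' f) = pathfinish (g f) \<and>
       img (pl' f) \<inter> P ` VH \<subseteq> {pathstart (g f), pathfinish (g f)} \<and>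
       (\<forall>x\<in>img (pl' f). \<exists>y\<in>path_image (g f). dist x y < \<epsilon>)"
  proof
    fix f assume f: "f \<in> insert e S"
    show "pl' f \<noteq> [] \<and> hd (pl' f) = pathstart (g f) \<and> last (pl' f) = pathfinish (g f) \<and>
       img (pl' f) \<inter> P ` VH \<subseteq> {pathstart (g f), pathfinish (g f)} \<and>
       (\<forall>x\<in>img (pl' f). \<exists>y\<in>path_image (g f). dist x y < \<epsilon>)"
    proof (cases "f = e")
      case True then show ?thesis using L LV p'e by simp
    next
      case False then show ?thesis using gp1 p'S f by simp
    qed
  qed
  have c2: "\<forall>f\<in>insert e S. \<forall>h\<in>insert e S. f \<noteq> h \<longrightarrow> finite (img (pl' f) \<inter> img (pl' h))"
  proof (intro ballI impI)
    fix f h assume fh: "f \<in> insert e S" "h \<in> insert e S" "f \<noteq> h"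
    consider "f = e" "h \<in> S" | "h = e" "f \<in> S" | "f \<in> S" "h \<in> S" using fh by auto
    then show "finite (img (pl' f) \<inter> img (pl' h))"
    proof cases
      case 1 then show ?thesis using Lfin[of h] p'S p'e by simp
    next
      case 2 then show ?thesis using Lfin[of f] p'S p'e by (simp add: Int_commute)
    next
      case 3 then show ?thesis using gp2 fh p'S by simp
    qed
  qed
  have c3: "\<forall>f\<in>insert e S. \<forall>h\<in>insert e S. \<forall>k\<in>insert e S. f \<noteq> h \<and> f \<noteq> k \<and> h \<noteq> k \<longrightarrow>
        img (pl' f) \<inter> img (pl' h) \<inter> img (pl' k) \<subseteq> P ` VH"
  proof (intro ballI impI)
    fix f h k assume fh: "f \<in> insert e S" "h \<in> insert e S" "k \<in> insert e S" "f \<noteq> h \<and> f \<noteq> k \<and> h \<noteq> k"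
    then consider "f = e" "h \<in> S" "k \<in> S" | "h = e" "f \<in> S" "k \<in> S" | "k = e" "f \<in> S" "h \<in> S"
      | "f \<in> S" "h \<in> S" "k \<in> S" by auto
    then show "img (pl' f) \<inter> img (pl' h) \<inter> img (pl' k) \<subseteq> P ` VH"
    proof cases
      case 1 then show ?thesis using Ltr[of h k] fh p'S p'e by auto
    next
      case 2 then show ?thesis using Ltr[of f k] fh p'S p'e by auto
    next
      case 3 then show ?thesis using Ltr[of f h] fh p'S p'e by auto
    next
      case 4 then show ?thesis using gp3 fh p'S by auto
    qed
  qed
  have "good_polys P VH g \<epsilon> (insert e S) pl'"
    unfolding good_polys_def using c1 c2 c3 by blast
  then show ?case by blast
qed

lemma core:
  fixes P :: "'b \<Rightarrow> complex" and g :: "'b set \<Rightarrow> real \<Rightarrow> complex"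
  assumes sg: "simple_graph VH EH" and inj: "inj_on P VH" and e: "\<epsilon> > 0"
    and gE: "\<forall>e\<in>EH. \<exists>v w. e = {v, w} \<and> path (g e) \<and> pathstart (g e) = P v \<and> pathfinish (g e) = P w"
  shows "\<exists>cv. drawing VH EH P cv \<and> (\<forall>e\<in>EH. \<forall>x\<in>path_image (cv e). \<exists>y\<in>path_image (g e). dist x y < \<epsilon>)"
proof -
  have fV: "finite VH" using sg unfolding simple_graph_def by auto
  have EHsub: "EH \<subseteq> Pow VH" using sg unfolding simple_graph_def by auto
  then have fE: "finite EH" using fV by (meson finite_Pow_iff finite_subset)
  have ends: "\<exists>v w. e = {v, w} \<and> v \<noteq> w \<and> v \<in> VH \<and> w \<in> VH \<and> path (g e) \<and> pathstart (g e) = P v \<and> pathfinish (g e) = P w"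
    if eH: "e \<in> EH" for e
  proof -
    obtain v w where vw: "e = {v, w}" "path (g e)" "pathstart (g e) = P v" "pathfinish (g e) = P w"
      using bspec[OF gE eH] by blast
    have "\<forall>e\<in>EH. \<exists>v w. e = {v, w} \<and> v \<noteq> w \<and> v \<in> VH \<and> w \<in> VH"
      using sg unfolding simple_graph_def by (elim conjE)
    then obtain v' w' where "e = {v', w'}" "v' \<noteq> w'" "v' \<in> VH" "w' \<in> VH"
      using eH by blast
    then have "v \<noteq> w" "v \<in> VH" "w \<in> VH" using vw(1) by (auto simp: doubleton_eq_iff)
    then show ?thesis using vw by blast
  qed
  have gE': "\<forall>e\<in>EH. path (g e) \<and> pathstart (g e) \<in> P ` VH \<and> pathfinish (g e) \<in> P ` VH"
    using ends by blast
  obtain pl where gp: "good_polys P VH g \<epsilon> EH pl"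
    using core_ind[OF fV e gE' fE] by blast
  note gp1 = gp[unfolded good_polys_def, THEN conjunct1]
  note gp3 = gp[unfolded good_polys_def, THEN conjunct2, THEN conjunct2]
  have arcex: "\<exists>q. arc q \<and> path_image q \<subseteq> img (pl e) \<and> pathstart q = pathstart (g e) \<and> pathfinish q = pathfinish (g e)"
    if eH: "e \<in> EH" for e
  proof -
    obtain v w where vw: "e = {v, w}" "v \<noteq> w" "v \<in> VH" "w \<in> VH" "pathstart (g e) = P v" "pathfinish (g e) = P w"
      using ends[OF eH] by blast
    have ne: "pathstart (g e) \<noteq> pathfinish (g e)" using vw inj by (metis inj_on_contraD)
    have pp: "path (ppath (pl e))" "pathstart (ppath (pl e)) = pathstart (g e)"
      "pathfinish (ppath (pl e)) = pathfinish (g e)" "path_image (ppath (pl e)) = img (pl e)"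
      using ppath_props[of "pl e"] gp1 eH by auto
    show ?thesis using path_contains_arc[OF pp(1,2,3) ne] pp(4) by metis
  qed
  define cv where "cv e = (SOME q. arc q \<and> path_image q \<subseteq> img (pl e) \<and> pathstart q = pathstart (g e) \<and> pathfinish q = pathfinish (g e))" for e
  have cvp: "arc (cv e) \<and> path_image (cv e) \<subseteq> img (pl e) \<and> pathstart (cv e) = pathstart (g e) \<and> pathfinish (cv e) = pathfinish (g e)"
    if "e \<in> EH" for e
    unfolding cv_def using someI_ex[OF arcex[OF that]] .
  have vert: "u \<in> e" if vh: "e \<in> EH" "u \<in> VH" "P u \<in> path_image (cv e)" for e u
  proof -
    obtain v w where vw: "e = {v, w}" "v \<noteq> w" "v \<in> VH" "w \<in> VH" "pathstart (g e) = P v" "pathfinish (g e) = P w"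
      using ends[OF vh(1)] by blast
    have "P u \<in> img (pl e) \<inter> P ` VH" using cvp[OF vh(1)] vh by auto
    moreover have "img (pl e) \<inter> P ` VH \<subseteq> {pathstart (g e), pathfinish (g e)}"
      using bspec[OF gp1 vh(1)] by (elim conjE)
    ultimately have "P u \<in> {pathstart (g e), pathfinish (g e)}" by blast
    then have "P u \<in> {P v, P w}" using vw(5,6) by simp
    then show ?thesis using inj vw vh(2) by (auto dest: inj_onD)
  qed
  have dr: "drawing VH EH P cv"
    unfolding drawing_def
  proof (intro conjI ballI impI)
    show "inj_on P VH" by (rule inj)
  next
    fix e assume "e \<in> EH"
    then show "arc (cv e)" using cvp by auto
  next
    fix e assume e: "e \<in> EH"
    then show "\<exists>v w. e = {v, w} \<and> pathstart (cv e) = P v \<and> pathfinish (cv e) = P w"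
      using ends[OF e] cvp[OF e] by metis
  next
    fix e u assume "e \<in> EH" "u \<in> VH" "P u \<in> path_image (cv e)"
    then show "u \<in> e" by (rule vert)
  next
    fix e f h assume efh: "e \<in> EH" "f \<in> EH" "h \<in> EH" "e \<noteq> f \<and> e \<noteq> h \<and> f \<noteq> h"
    show "edge_interior P cv e \<inter> edge_interior P cv f \<inter> edge_interior P cv h = {}"
    proof (rule ccontr)
      assume "edge_interior P cv e \<inter> edge_interior P cv f \<inter> edge_interior P cv h \<noteq> {}"
      then obtain x where x: "x \<in> path_image (cv e)" "x \<notin> P ` e" "x \<in> path_image (cv f)" "x \<in> path_image (cv h)"
        unfolding edge_interior_def by auto
      then have "x \<in> img (pl e) \<inter> img (pl f) \<inter> img (pl h)" using cvp efh by blast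
      then have "x \<in> P ` VH" using gp3 efh by blast
      then obtain u where "u \<in> VH" "x = P u" by auto
      then show False using vert[OF efh(1)] x by auto
    qed
  qed
  show ?thesis
    using dr gp1 cvp by (intro exI[of _ cv]) blast
qed


definition orient :: "('a \<Rightarrow> complex) \<Rightarrow> ('a set \<Rightarrow> real \<Rightarrow> complex) \<Rightarrow> 'a \<Rightarrow> 'a \<Rightarrow> real \<Rightarrow> complex" where
  "orient pos cv z z' = (if pathstart (cv {z, z'}) = pos z then cv {z, z'} else reversepath (cv {z, z'}))"

fun rpath :: "('a \<Rightarrow> complex) \<Rightarrow> ('a set \<Rightarrow> real \<Rightarrow> complex) \<Rightarrow> 'a list \<Rightarrow> real \<Rightarrow> complex" where
  "rpath pos cv [] = linepath 0 0"
| "rpath pos cv [z] = linepath (pos z) (pos z)"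
| "rpath pos cv (z # z' # zs) = orient pos cv z z' +++ rpath pos cv (z' # zs)"

fun redges :: "'a list \<Rightarrow> 'a set set" where
  "redges (z # z' # zs) = insert {z, z'} (redges (z' # zs))"
| "redges _ = {}"

fun consec :: "'a set set \<Rightarrow> 'a list \<Rightarrow> bool" where
  "consec Es (z # z' # zs) = ({z, z'} \<in> Es \<and> consec Es (z' # zs))"
| "consec Es _ = True"

lemma consec_nth: "(\<forall>i. Suc i < length xs \<longrightarrow> {xs ! i, xs ! Suc i} \<in> Es) \<Longrightarrow> consec Es xs"
  by (induction Es xs rule: consec.induct) (auto, (metis Suc_less_eq nth_Cons_Suc length_Cons)+)

lemma walk_consec: "walk Vs Es xs \<Longrightarrow> consec Es xs"
  unfolding walk_def by (auto intro: consec_nth)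

lemma consec_append: "consec Es xs \<Longrightarrow> consec Es ys \<Longrightarrow> xs \<noteq> [] \<Longrightarrow> ys \<noteq> [] \<Longrightarrow>
   {last xs, hd ys} \<in> Es \<Longrightarrow> consec Es (xs @ ys)"
proof (induction Es xs rule: consec.induct)
  case (1 Es z z' zs) then show ?case by simp
next
  case ("2_1" Es) then show ?case by simp
next
  case ("2_2" Es z) then show ?case by (cases ys) auto
qed

lemma consec_rev: "consec Es xs \<Longrightarrow> consec Es (rev xs)"
proof (induction Es xs rule: consec.induct)
  case (1 Es z z' zs)
  then have "consec Es (rev (z' # zs))" by simp
  moreover have "{last (rev (z' # zs)), hd [z]} \<in> Es" using 1 by (simp add: insert_commute)
  ultimately show ?case using consec_append[of Es "rev (z' # zs)" "[z]"] by simp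
qed auto

lemma consec_mono: "consec Es xs \<Longrightarrow> Es \<subseteq> Es' \<Longrightarrow> consec Es' xs"
  by (induction Es xs rule: consec.induct) auto

lemma redges_sub: "a \<in> redges zs \<Longrightarrow> a \<subseteq> set zs"
  by (induction zs rule: redges.induct) auto

lemma redges_EG: "consec Es zs \<Longrightarrow> redges zs \<subseteq> Es"
  by (induction Es zs rule: consec.induct) auto

lemma redges_card: "finite (redges zs) \<and> card (redges zs) \<le> length zs - 1"
proof (induction zs rule: redges.induct)
  case (1 z z' zs)
  then show ?case by (auto simp: card_insert_if)
qed auto

lemma drawing_edge:
  assumes "drawing V E pos cv" "e \<in> E"
  shows "arc (cv e) \<and> (\<exists>v w. e = {v, w} \<and> pathstart (cv e) = pos v \<and> pathfinish (cv e) = pos w)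
    \<and> (\<forall>u\<in>V. pos u \<in> path_image (cv e) \<longrightarrow> u \<in> e)"
proof -
  have "\<forall>e\<in>E. arc (cv e) \<and> (\<exists>v w. e = {v, w} \<and> pathstart (cv e) = pos v \<and> pathfinish (cv e) = pos w)
    \<and> (\<forall>u\<in>V. pos u \<in> path_image (cv e) \<longrightarrow> u \<in> e)"
    using assms(1) unfolding drawing_def by (elim conjE)
  then show ?thesis using assms(2) by (rule bspec)
qed

lemma rpath_props:
  assumes dr: "drawing VG EG pos cv" and sg: "simple_graph VG EG"
  shows "consec EG zs \<Longrightarrow> zs \<noteq> [] \<Longrightarrow> path (rpath pos cv zs) \<and> pathstart (rpath pos cv zs) = pos (hd zs)
     \<and> pathfinish (rpath pos cv zs) = pos (last zs)
     \<and> (2 \<le> length zs \<longrightarrow> path_image (rpath pos cv zs) \<subseteq> (\<Union>a\<in>redges zs. path_image (cv a)))"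
proof (induction zs rule: redges.induct)
  case (1 z z' zs)
  have E: "{z, z'} \<in> EG" using 1 by simp
  obtain v w where vw: "{z, z'} = {v, w}" "pathstart (cv {z, z'}) = pos v" "pathfinish (cv {z, z'}) = pos w"
    "arc (cv {z, z'})"
    using drawing_edge[OF dr E] by blast
  have zz: "z \<noteq> z'" "z \<in> VG" "z' \<in> VG"
    using sg E unfolding simple_graph_def by (auto simp: doubleton_eq_iff)
  have inj: "inj_on pos VG" using dr unfolding drawing_def by auto
  have o: "path (orient pos cv z z') \<and> pathstart (orient pos cv z z') = pos z \<and> pathfinish (orient pos cv z z') = pos z'
     \<and> path_image (orient pos cv z z') = path_image (cv {z, z'})"
  proof (cases "pathstart (cv {z, z'}) = pos z")
    case True
    have "pos v = pos z" using True vw(2) by simp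
    moreover have "v \<in> VG"
    proof -
      have "v \<in> {z, z'}" unfolding vw(1) by simp
      then show ?thesis using zz by auto
    qed
    ultimately have "v = z" using inj zz(2) by (auto dest: inj_onD)
    then have "w = z'" using vw(1) zz(1) by (auto simp: doubleton_eq_iff)
    then show ?thesis using True vw(3,4) unfolding orient_def by (simp add: arc_imp_path)
  next
    case False
    have "v \<noteq> z" using False vw(2) by auto
    then have vz: "v = z'" "w = z" using vw(1) by (auto simp: doubleton_eq_iff)
    show ?thesis using False vw(2,3,4) unfolding orient_def vz
      by (simp add: arc_imp_path path_image_reversepath)
  qed
  have IH: "path (rpath pos cv (z' # zs)) \<and> pathstart (rpath pos cv (z' # zs)) = pos z'
     \<and> pathfinish (rpath pos cv (z' # zs)) = pos (last (z' # zs))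
     \<and> (2 \<le> length (z' # zs) \<longrightarrow> path_image (rpath pos cv (z' # zs)) \<subseteq> (\<Union>a\<in>redges (z' # zs). path_image (cv a)))"
    using 1 by simp
  have img: "path_image (rpath pos cv (z # z' # zs)) \<subseteq> (\<Union>a\<in>redges (z # z' # zs). path_image (cv a))"
  proof (cases zs)
    case Nil
    have "pos z' \<in> path_image (cv {z, z'})" using o by (metis pathfinish_in_path_image)
    then show ?thesis using o IH Nil by (auto simp: path_image_join)
  next
    case (Cons y ys)
    then show ?thesis using o IH by (auto simp: path_image_join)
  qed
  show ?case using o IH img by (auto simp: path_image_join)
qed auto

lemma cp_intro:
  assumes "e \<in> E" "f \<in> E" "e \<inter> f = {}" "path_image (cv e) \<inter> path_image (cv f) \<noteq> {}"
  shows "{e, f} \<in> crossing_pairs E pos cv"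
  unfolding crossing_pairs_def
  by (rule CollectI, rule exI[of _ e], rule exI[of _ f]) (simp add: assms)

lemma cp_elim:
  assumes "{e, f} \<in> crossing_pairs E pos cv"
  obtains e' f' where "{e, f} = {e', f'}" "e' \<in> E" "f' \<in> E" "e' \<inter> f' = {}"
        "path_image (cv e') \<inter> path_image (cv f') \<noteq> {}"
proof -
  have "\<exists>e' f'. {e, f} = {e', f'} \<and> e' \<in> E \<and> f' \<in> E \<and> e' \<inter> f' = {} \<and>
        path_image (cv e') \<inter> path_image (cv f') \<noteq> {}"
    using assms unfolding crossing_pairs_def by (simp only: mem_Collect_eq)
  then show ?thesis by (elim exE conjE) (rule that)
qed

lemma bearing_both:
  assumes "bearing E pos cv B" "{e, f} \<in> crossing_pairs E pos cv"
  shows "(e, f) \<in> B \<or> (f, e) \<in> B"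
proof -
  have "\<forall>e f. {e, f} \<in> crossing_pairs E pos cv \<longrightarrow> (e, f) \<in> B \<or> (f, e) \<in> B"
    using assms(1) unfolding bearing_def by (elim conjE)
  then show ?thesis using assms(2) by (elim allE impE)
qed

lemma finite_min_choice:
  fixes Q :: "'i \<Rightarrow> real \<Rightarrow> bool"
  assumes "finite I" "\<forall>i\<in>I. \<exists>d>0. Q i d" "\<And>i d d'. Q i d \<Longrightarrow> 0 < d' \<Longrightarrow> d' \<le> d \<Longrightarrow> Q i d'"
  shows "\<exists>d>0. \<forall>i\<in>I. Q i d"
  using assms(1,2)
proof (induction I rule: finite_induct)
  case empty then show ?case by (auto intro: exI[of _ 1])
next
  case (insert i I)
  then obtain d where d: "d > 0" "\<forall>j\<in>I. Q j d" by auto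
  obtain d' where d': "d' > 0" "Q i d'" using insert by auto
  show ?case using d d' assms(3)
    by (intro exI[of _ "min d d'"]) (auto simp: min_def)
qed


theorem lemma7:
  fixes k r :: nat
    and VG :: "'a set" and EG :: "'a set set"
    and VH :: "'b set" and EH :: "'b set set"
  assumes "simple_graph VG EG"
    and "simple_graph VH EH"
    and "gap_cover_planar k VG EG"
    and "shallow_minor r VH EH VG EG"
  shows "gap_cover_planar ((2 * r + 1) * k) VH EH"
proof -
  note sgG = assms(1) and sgH = assms(2)
  obtain pos cv where gd: "gap_cover_planar_drawing k VG EG pos cv"
    using assms(3) unfolding gap_cover_planar_def by blast
  have drG: "drawing VG EG pos cv" using gd unfolding gap_cover_planar_drawing_def by blast
  obtain B where bB: "bearing EG pos cv B" and covG: "\<forall>e\<in>EG. \<exists>C. C \<subseteq> VG - e \<and> finite C \<and> card C \<le> k \<and> B_cover B e C"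
    using gd unfolding gap_cover_planar_drawing_def by blast
  obtain Cg where Cg: "\<And>a. a \<in> EG \<Longrightarrow> Cg a \<subseteq> VG - a \<and> finite (Cg a) \<and> card (Cg a) \<le> k \<and> B_cover B a (Cg a)"
    using bchoice[OF covG] by blast
  obtain mu where mu: "shallow_model r VH EH VG EG mu"
    using assms(4) unfolding shallow_minor_def by blast
  define Vm where "Vm u = fst (mu u)" for u
  define Em where "Em u = snd (mu u)" for u
  have mu1: "\<forall>v\<in>VH. subgraph (Vm v) (Em v) VG EG \<and>
        Vm v \<noteq> {} \<and> connected_graph (Vm v) (Em v) \<and> radius_le (Vm v) (Em v) r"
    using mu unfolding shallow_model_def Vm_def Em_def by (elim conjE)
  have mu2: "\<forall>v\<in>VH. \<forall>w\<in>VH. v \<noteq> w \<longrightarrow> Vm v \<inter> Vm w = {}"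
    using mu unfolding shallow_model_def Vm_def Em_def by (elim conjE)
  have mu3: "\<forall>v w. {v, w} \<in> EH \<longrightarrow> (\<exists>x\<in>Vm v. \<exists>y\<in>Vm w. {x, y} \<in> EG)"
    using mu unfolding shallow_model_def Vm_def Em_def by (elim conjE)
  have muV: "\<And>u. u \<in> VH \<Longrightarrow> subgraph (Vm u) (Em u) VG EG \<and> Vm u \<noteq> {} \<and> radius_le (Vm u) (Em u) r"
    using mu1 by blast
  have disj: "\<And>u u'. u \<in> VH \<Longrightarrow> u' \<in> VH \<Longrightarrow> u \<noteq> u' \<Longrightarrow> Vm u \<inter> Vm u' = {}"
    using mu2 by blast
  have conn: "\<And>v w. {v, w} \<in> EH \<Longrightarrow> \<exists>x\<in>Vm v. \<exists>y\<in>Vm w. {x, y} \<in> EG"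
    using mu3 by blast
  define cen where "cen u = (SOME c. c \<in> Vm u \<and> (\<forall>x\<in>Vm u. \<exists>xs. walk (Vm u) (Em u) xs \<and> hd xs = c \<and> last xs = x \<and> length xs \<le> r + 1))" for u
  have cen: "cen u \<in> Vm u \<and> (\<forall>x\<in>Vm u. \<exists>xs. walk (Vm u) (Em u) xs \<and> hd xs = cen u \<and> last xs = x \<and> length xs \<le> r + 1)"
    if uV: "u \<in> VH" for u
  proof -
    have "radius_le (Vm u) (Em u) r" using muV[OF uV] by (elim conjE)
    then have "\<exists>c. c \<in> Vm u \<and> (\<forall>x\<in>Vm u. \<exists>xs. walk (Vm u) (Em u) xs \<and> hd xs = c \<and> last xs = x \<and> length xs \<le> r + 1)"
      unfolding radius_le_def by (elim bexE) (rule exI, rule conjI)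
    then show ?thesis unfolding cen_def by (rule someI_ex)
  qed
  have VmG: "Vm u \<subseteq> VG" "Em u \<subseteq> EG" if "u \<in> VH" for u
    using muV[OF that] unfolding subgraph_def by auto
  have EHV: "e \<in> EH \<Longrightarrow> \<exists>v w. e = {v, w} \<and> v \<noteq> w \<and> v \<in> VH \<and> w \<in> VH" for e
    using sgH unfolding simple_graph_def by blast
  
  have route: "\<exists>zs. \<exists>v w. e = {v, w} \<and> v \<noteq> w \<and> v \<in> VH \<and> w \<in> VH \<and> hd zs = cen v \<and> last zs = cen w \<and>
      2 \<le> length zs \<and> length zs \<le> 2 * r + 2 \<and> consec EG zs \<and> set zs \<subseteq> Vm v \<union> Vm w" if eH: "e \<in> EH" for e
  proof -
    obtain v w where vw: "e = {v, w}" "v \<noteq> w" "v \<in> VH" "w \<in> VH" using EHV[OF eH] by blast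
    have "{v, w} \<in> EH" using eH vw(1) by simp
    then obtain x y where xy: "x \<in> Vm v" "y \<in> Vm w" "{x, y} \<in> EG" using conn by blast
    obtain xs where xs: "walk (Vm v) (Em v) xs" "hd xs = cen v" "last xs = x" "length xs \<le> r + 1"
      using cen[OF vw(3)] xy(1) by blast
    obtain ys where ys: "walk (Vm w) (Em w) ys" "hd ys = cen w" "last ys = y" "length ys \<le> r + 1"
      using cen[OF vw(4)] xy(2) by blast
    have ne: "xs \<noteq> []" "ys \<noteq> []" using xs(1) ys(1) unfolding walk_def by auto
    have c1: "consec EG xs" using walk_consec[OF xs(1)] consec_mono VmG[OF vw(3)] by blast
    have c2: "consec EG (rev ys)" using walk_consec[OF ys(1)] consec_mono VmG[OF vw(4)] consec_rev by blast
    have "{last xs, hd (rev ys)} \<in> EG" using xs(3) ys(3) xy(3) ne by (simp add: hd_rev)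
    then have c: "consec EG (xs @ rev ys)" using consec_append[OF c1 c2] ne by simp
    have s: "set (xs @ rev ys) \<subseteq> Vm v \<union> Vm w" using xs(1) ys(1) unfolding walk_def by auto
    have l1: "2 \<le> length (xs @ rev ys)" using ne by (cases xs; cases ys) auto
    have l2: "length (xs @ rev ys) \<le> 2 * r + 2" using xs(4) ys(4) by simp
    note l = l1 l2
    have h: "hd (xs @ rev ys) = cen v" "last (xs @ rev ys) = cen w"
      using ne xs(2) ys(2) by (auto simp: last_rev)
    have conj: "e = {v, w} \<and> v \<noteq> w \<and> v \<in> VH \<and> w \<in> VH \<and> hd (xs @ rev ys) = cen v \<and> last (xs @ rev ys) = cen w \<and>
      2 \<le> length (xs @ rev ys) \<and> length (xs @ rev ys) \<le> 2 * r + 2 \<and> consec EG (xs @ rev ys) \<and> set (xs @ rev ys) \<subseteq> Vm v \<union> Vm w"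
      using vw c s l h by simp
    show ?thesis by (rule exI[of _ "xs @ rev ys"], rule exI[of _ v], rule exI[of _ w], rule conj)
  qed
  have "\<exists>R. \<forall>e\<in>EH. \<exists>v w. e = {v, w} \<and> v \<noteq> w \<and> v \<in> VH \<and> w \<in> VH \<and> hd (R e) = cen v \<and> last (R e) = cen w \<and>
      2 \<le> length (R e) \<and> length (R e) \<le> 2 * r + 2 \<and> consec EG (R e) \<and> set (R e) \<subseteq> Vm v \<union> Vm w"
    using bchoice[OF ballI[OF route]] .
  then obtain R where R0: "\<forall>e\<in>EH. \<exists>v w. e = {v, w} \<and> v \<noteq> w \<and> v \<in> VH \<and> w \<in> VH \<and> hd (R e) = cen v \<and> last (R e) = cen w \<and>
      2 \<le> length (R e) \<and> length (R e) \<le> 2 * r + 2 \<and> consec EG (R e) \<and> set (R e) \<subseteq> Vm v \<union> Vm w"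
    by (rule exE)
  have R: "\<And>e. e \<in> EH \<Longrightarrow> \<exists>v w. e = {v, w} \<and> v \<noteq> w \<and> v \<in> VH \<and> w \<in> VH \<and> hd (R e) = cen v \<and> last (R e) = cen w \<and>
      2 \<le> length (R e) \<and> length (R e) \<le> 2 * r + 2 \<and> consec EG (R e) \<and> set (R e) \<subseteq> Vm v \<union> Vm w"
    using R0 by (rule bspec)
  define P where "P u = pos (cen u)" for u
  have injG: "inj_on pos VG" using drG unfolding drawing_def by blast
  have injP: "inj_on P VH"
  proof (rule inj_onI)
    fix u u' assume "u \<in> VH" "u' \<in> VH" "P u = P u'"
    then show "u = u'" using cen disj VmG injG unfolding P_def by (metis disjoint_iff inj_onD subsetD)
  qed
  define g where "g e = rpath pos cv (R e)" for e
  have gprops: "path (g e) \<and> pathstart (g e) = pos (hd (R e)) \<and> pathfinish (g e) = pos (last (R e)) \<and>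
      path_image (g e) \<subseteq> (\<Union>a\<in>redges (R e). path_image (cv a))" if "e \<in> EH" for e
    using rpath_props[OF drG sgG, of "R e"] R[OF that] unfolding g_def by fastforce
  have gE: "\<forall>e\<in>EH. \<exists>v w. e = {v, w} \<and> path (g e) \<and> pathstart (g e) = P v \<and> pathfinish (g e) = P w"
    using gprops R unfolding P_def by metis
  
  have fEG: "finite EG"
  proof -
    have "EG \<subseteq> Pow VG" "finite VG" using sgG unfolding simple_graph_def by auto
    then show ?thesis by (meson finite_Pow_iff finite_subset)
  qed
  have sep: "\<forall>ab\<in>EG \<times> EG. \<exists>d>0. path_image (cv (fst ab)) \<inter> path_image (cv (snd ab)) = {} \<longrightarrow>
      (\<forall>y\<in>path_image (cv (fst ab)). \<forall>y'\<in>path_image (cv (snd ab)). d \<le> dist y y')"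
  proof
    fix ab assume ab: "ab \<in> EG \<times> EG"
    then have "arc (cv (fst ab))" "arc (cv (snd ab))" using drG unfolding drawing_def by auto
    then have "compact (path_image (cv (fst ab)))" "closed (path_image (cv (snd ab)))"
      by (auto simp: compact_path_image closed_path_image arc_imp_path)
    then show "\<exists>d>0. path_image (cv (fst ab)) \<inter> path_image (cv (snd ab)) = {} \<longrightarrow>
      (\<forall>y\<in>path_image (cv (fst ab)). \<forall>y'\<in>path_image (cv (snd ab)). d \<le> dist y y')"
      using separate_compact_closed by (metis zero_less_one)
  qed
  obtain d where d: "d > 0" "\<forall>ab\<in>EG \<times> EG. path_image (cv (fst ab)) \<inter> path_image (cv (snd ab)) = {} \<longrightarrow>
      (\<forall>y\<in>path_image (cv (fst ab)). \<forall>y'\<in>path_image (cv (snd ab)). d \<le> dist y y')"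
    using finite_min_choice[of "EG \<times> EG" "\<lambda>ab d. path_image (cv (fst ab)) \<inter> path_image (cv (snd ab)) = {} \<longrightarrow>
      (\<forall>y\<in>path_image (cv (fst ab)). \<forall>y'\<in>path_image (cv (snd ab)). d \<le> dist y y')"] fEG sep
    by fastforce
  obtain cvH where cvH: "drawing VH EH P cvH" "\<forall>e\<in>EH. \<forall>x\<in>path_image (cvH e). \<exists>y\<in>path_image (g e). dist x y < d/2"
    using core[OF sgH injP _ gE, of "d/2"] d(1) by auto
  have redEG: "redges (R e) \<subseteq> EG" if "e \<in> EH" for e using R[OF that] redges_EG by blast
  have redV: "\<exists>v w. e = {v, w} \<and> v \<in> VH \<and> w \<in> VH \<and> (\<forall>a\<in>redges (R e). a \<subseteq> Vm v \<union> Vm w)"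
    if "e \<in> EH" for e using R[OF that] redges_sub by blast
  have cross: "\<exists>a\<in>redges (R e). \<exists>b\<in>redges (R f). {a, b} \<in> crossing_pairs EG pos cv"
    if ef: "e \<in> EH" "f \<in> EH" "e \<inter> f = {}" "path_image (cvH e) \<inter> path_image (cvH f) \<noteq> {}" for e f
  proof -
    obtain x where x: "x \<in> path_image (cvH e)" "x \<in> path_image (cvH f)" using ef(4) by blast
    obtain y where y: "y \<in> path_image (g e)" "dist x y < d/2" using cvH(2) ef(1) x(1) by blast
    obtain y' where y': "y' \<in> path_image (g f)" "dist x y' < d/2" using cvH(2) ef(2) x(2) by blast
    obtain a where a: "a \<in> redges (R e)" "y \<in> path_image (cv a)" using gprops[OF ef(1)] y(1) by blast
    obtain b where b: "b \<in> redges (R f)" "y' \<in> path_image (cv b)" using gprops[OF ef(2)] y'(1) by blast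
    have ab: "a \<in> EG" "b \<in> EG" using a b redEG ef by auto
    have "dist y x < d/2" "dist y' x < d/2" using y(2) y'(2) by (simp_all add: dist_commute)
    then have "dist y y' < d" by (rule dist_triangle_half_l)
    then have meet: "path_image (cv a) \<inter> path_image (cv b) \<noteq> {}"
      using d(2) ab a(2) b(2) by fastforce
    obtain v w where vw: "e = {v, w}" "v \<in> VH" "w \<in> VH" "\<forall>a\<in>redges (R e). a \<subseteq> Vm v \<union> Vm w"
      using redV[OF ef(1)] by blast
    obtain v' w' where vw': "f = {v', w'}" "v' \<in> VH" "w' \<in> VH" "\<forall>a\<in>redges (R f). a \<subseteq> Vm v' \<union> Vm w'"
      using redV[OF ef(2)] by blast
    have "v \<noteq> v'" "v \<noteq> w'" "w \<noteq> v'" "w \<noteq> w'" using ef(3) vw(1) vw'(1) by auto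
    then have "(Vm v \<union> Vm w) \<inter> (Vm v' \<union> Vm w') = {}"
      using disj vw vw' by blast
    then have "a \<inter> b = {}" using vw(4) vw'(4) a(1) b(1) by blast
    then have "{a, b} \<in> crossing_pairs EG pos cv"
      using ab meet by (intro cp_intro)
    then show ?thesis using a(1) b(1) by blast
  qed
  define BH where "BH = {(e, f). e \<in> EH \<and> f \<in> EH \<and> e \<inter> f = {} \<and> path_image (cvH e) \<inter> path_image (cvH f) \<noteq> {} \<and>
      (\<exists>a\<in>redges (R e). \<exists>b\<in>redges (R f). (a, b) \<in> B)}"
  have bear: "bearing EH P cvH BH"
    unfolding bearing_def
  proof (intro conjI allI impI ballI)
    fix p assume pB: "p \<in> BH"
    obtain e f where p: "p = (e, f)" by (cases p)
    have "e \<in> EH" "f \<in> EH" "e \<inter> f = {}" "path_image (cvH e) \<inter> path_image (cvH f) \<noteq> {}"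
      using pB unfolding p BH_def by simp_all
    then have "{e, f} \<in> crossing_pairs EH P cvH" by (rule cp_intro)
    then show "case p of (e, f) \<Rightarrow> {e, f} \<in> crossing_pairs EH P cvH"
      unfolding p by simp
  next
    fix e f assume "{e, f} \<in> crossing_pairs EH P cvH"
    then obtain e' f' where ef: "{e, f} = {e', f'}" "e' \<in> EH" "f' \<in> EH" "e' \<inter> f' = {}"
        "path_image (cvH e') \<inter> path_image (cvH f') \<noteq> {}"
      by (rule cp_elim)
    obtain a b where ab: "a \<in> redges (R e')" "b \<in> redges (R f')" "{a, b} \<in> crossing_pairs EG pos cv"
      using cross[OF ef(2-5)] by blast
    have "(a, b) \<in> B \<or> (b, a) \<in> B" using bB ab(3) by (rule bearing_both)
    then have "(e', f') \<in> BH \<or> (f', e') \<in> BH"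
      unfolding BH_def using ef ab by (auto simp: Int_commute)
    then show "(e, f) \<in> BH \<or> (f, e) \<in> BH" using ef(1) by (auto simp: doubleton_eq_iff)
  qed
  have covH: "\<exists>C. C \<subseteq> VH - e \<and> finite C \<and> card C \<le> (2 * r + 1) * k \<and> B_cover BH e C"
    if e: "e \<in> EH" for e
  proof -
    define Z where "Z = (\<Union>a\<in>redges (R e). Cg a)"
    define C where "C = {u \<in> VH - e. Z \<inter> Vm u \<noteq> {}}"
    have fr: "finite (redges (R e))" "card (redges (R e)) \<le> 2 * r + 1"
      using redges_card[of "R e"] R[OF e] by auto
    have fZ: "finite Z" unfolding Z_def using fr(1) Cg redEG[OF e] by blast
    have "card Z \<le> (\<Sum>a\<in>redges (R e). card (Cg a))" unfolding Z_def using fr(1) card_UN_le by blast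
    also have "\<dots> \<le> card (redges (R e)) * k"
      using sum_bounded_above[of "redges (R e)" "\<lambda>a. card (Cg a)" k] Cg redEG[OF e] by fastforce
    also have "\<dots> \<le> (2 * r + 1) * k" by (rule mult_le_mono1[OF fr(2)])
    finally have cZ: "card Z \<le> (2 * r + 1) * k" .
    define h where "h u = (SOME z. z \<in> Z \<inter> Vm u)" for u
    have hC: "h u \<in> Z \<inter> Vm u" if uC: "u \<in> C" for u
    proof -
      have "Z \<inter> Vm u \<noteq> {}" using uC unfolding C_def by simp
      then have "\<exists>z. z \<in> Z \<inter> Vm u" by auto
      then show ?thesis unfolding h_def by (rule someI_ex)
    qed
    have "inj_on h C"
    proof (rule inj_onI)
      fix u u' assume uu: "u \<in> C" "u' \<in> C" "h u = h u'"
      have V: "u \<in> VH" "u' \<in> VH" using uu(1,2) unfolding C_def by auto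
      have "h u \<in> Vm u" "h u \<in> Vm u'" using hC[OF uu(1)] hC[OF uu(2)] uu(3) by auto
      then have "Vm u \<inter> Vm u' \<noteq> {}" by auto
      then show "u = u'" using disj[OF V] by auto
    qed
    moreover have "h ` C \<subseteq> Z" using hC by blast
    ultimately have "card C \<le> card Z" using card_inj_on_le fZ by blast
    then have cC: "card C \<le> (2 * r + 1) * k" using cZ by simp
    have fC: "finite C" unfolding C_def using sgH unfolding simple_graph_def by auto
    have bc: "B_cover BH e C"
      unfolding B_cover_def
    proof (intro allI impI)
      fix f assume "(e, f) \<in> BH"
      then obtain a b where ab: "f \<in> EH" "e \<inter> f = {}" "a \<in> redges (R e)" "b \<in> redges (R f)" "(a, b) \<in> B"
        unfolding BH_def by blast
      have "B_cover B a (Cg a)" using Cg redEG[OF e] ab(3) by blast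
      then obtain z where z: "z \<in> b" "z \<in> Cg a" using ab(5) unfolding B_cover_def by blast
      obtain v' w' where vw': "f = {v', w'}" "v' \<in> VH" "w' \<in> VH" "\<forall>a\<in>redges (R f). a \<subseteq> Vm v' \<union> Vm w'"
        using redV[OF ab(1)] by blast
      have zZ: "z \<in> Z" unfolding Z_def using z(2) ab(3) by blast
      have "z \<in> Vm v' \<or> z \<in> Vm w'" using vw'(4) ab(4) z(1) by blast
      moreover have "v' \<notin> e" "w' \<notin> e" using ab(2) vw'(1) by auto
      ultimately have "v' \<in> C \<or> w' \<in> C" unfolding C_def using zZ vw'(2,3) by auto
      then show "f \<inter> C \<noteq> {}" using vw'(1) by auto
    qed
    have sub: "C \<subseteq> VH - e" unfolding C_def by auto
    have conj: "C \<subseteq> VH - e \<and> finite C \<and> card C \<le> (2 * r + 1) * k \<and> B_cover BH e C"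
      using sub fC cC bc by simp
    show ?thesis by (rule exI[of _ C], rule conj)
  qed
  have "gap_cover_planar_drawing ((2 * r + 1) * k) VH EH P cvH"
    unfolding gap_cover_planar_drawing_def using cvH(1) bear covH by blast
  then show ?thesis unfolding gap_cover_planar_def by blast
qed
end
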